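(* Let $G=(V,E)$ be a connected finite directed graph and $\nu$ a measure on $E$ with $\nu(e)>0$ for all $e\in E$. Let $|||\cdot|||$ be a seminorm on $\mathbb{R}^V$ with $|||\mathsf 1_V|||=0$ and let $C\in[0,\infty)$. If $|||\mathsf 1_A|||\le C\|\mathsf 1_A\|_{W^{1,1}(\nu)}$ for all simply connected sets $A\subseteq V$, then $|||f|||\le C\|f\|_{W^{1,1}(\nu)}$ for all $f:V\to\mathbb{R}$.
   Context: For $f:V\to\mathbb{R}$, $\|f\|_{W^{1,1}(\nu)}=\sum_{uv\in E}|f(v)-f(u)|\,\nu(uv)$. A set $A\subseteq V$ is simply connected if both $A$ and its complement $A^c=V\setminus A$ induce connected subgraphs (of the underlying undirected graph). $\mathsf 1_A$ is the indicator function of $A$. *)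

theory Defs
  imports Main "HOL-Analysis.Analysis"
begin

text \<open>Directed graph on the finite vertex type 'a (vertex set V = UNIV), edge set
  E :: ('a * 'a) set; an edge uv is the pair (u,v).\<close>

definition induces_connected :: "('a \<times> 'a) set \<Rightarrow> 'a set \<Rightarrow> bool" where
  "induces_connected E A \<longleftrightarrow>
     (\<forall>u\<in>A. \<forall>v\<in>A. (u, v) \<in> ({(x, y). x \<in> A \<and> y \<in> A \<and> ((x, y) \<in> E \<or> (y, x) \<in> E)})\<^sup>*)"

definition graph_connected :: "('a \<times> 'a) set \<Rightarrow> bool" where
  "graph_connected E \<longleftrightarrow> induces_connected E UNIV"

definition simply_connected :: "('a \<times> 'a) set \<Rightarrow> 'a set \<Rightarrow> bool" where
  "simply_connected E A \<longleftrightarrow> induces_connected E A \<and> induces_connected E (UNIV - A)"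

definition W11_norm :: "('a \<times> 'a) set \<Rightarrow> ('a \<times> 'a \<Rightarrow> real) \<Rightarrow> ('a \<Rightarrow> real) \<Rightarrow> real" where
  "W11_norm E \<nu> f = (\<Sum>e\<in>E. \<bar>f (snd e) - f (fst e)\<bar> * \<nu> e)"

definition is_seminorm :: "(('a \<Rightarrow> real) \<Rightarrow> real) \<Rightarrow> bool" where
  "is_seminorm N \<longleftrightarrow> (\<forall>f g. N (\<lambda>x. f x + g x) \<le> N f + N g) \<and>
                      (\<forall>c f. N (\<lambda>x. c * f x) = \<bar>c\<bar> * N f)"

definition indic :: "'a set \<Rightarrow> 'a \<Rightarrow> real" where
  "indic A = (\<lambda>x. if x \<in> A then 1 else 0)"

end

theory Submission
  imports Defs
begin

definition RR :: "('a \<times> 'a) set \<Rightarrow> 'a set \<Rightarrow> ('a \<times> 'a) set" where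
  "RR E S = {(x, y). x \<in> S \<and> y \<in> S \<and> ((x, y) \<in> E \<or> (y, x) \<in> E)}"

lemma ic_RR: "induces_connected E A \<longleftrightarrow> (\<forall>u\<in>A. \<forall>v\<in>A. (u, v) \<in> (RR E A)\<^sup>*)"
  unfolding induces_connected_def RR_def by simp

lemma split_disconn:
  assumes "\<not> induces_connected E S"
  obtains S1 S2 where "S1 \<union> S2 = S" "S1 \<inter> S2 = {}" "S1 \<noteq> {}" "S2 \<noteq> {}"
    "\<forall>x\<in>S1. \<forall>y\<in>S2. (x,y)\<notin>E \<and> (y,x)\<notin>E"
proof -
  obtain u v where uv: "u \<in> S" "v \<in> S" "(u, v) \<notin> (RR E S)\<^sup>*"
    using assms unfolding ic_RR by blast
  define S1 where "S1 = {w\<in>S. (u,w) \<in> (RR E S)\<^sup>*}"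
  define S2 where "S2 = S - S1"
  have "\<forall>x\<in>S1. \<forall>y\<in>S2. (x,y)\<notin>E \<and> (y,x)\<notin>E"
  proof (intro ballI)
    fix x y assume x: "x \<in> S1" and y: "y \<in> S2"
    show "(x,y)\<notin>E \<and> (y,x)\<notin>E"
    proof (rule ccontr)
      assume "\<not> ((x,y)\<notin>E \<and> (y,x)\<notin>E)"
      then have "(x,y) \<in> RR E S" using x y unfolding RR_def S1_def S2_def by auto
      then have "(u,y) \<in> (RR E S)\<^sup>*" using x unfolding S1_def
        using rtrancl.rtrancl_into_rtrancl by fastforce
      then show False using y unfolding S1_def S2_def by auto
    qed
  qed
  moreover have "u \<in> S1" unfolding S1_def using uv by auto
  moreover have "v \<in> S2" unfolding S1_def S2_def using uv by auto
  moreover have "S1 \<union> S2 = S" "S1 \<inter> S2 = {}" unfolding S2_def S1_def by auto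
  ultimately show ?thesis using that[of S1 S2] by blast
qed

lemma connect_union:
  assumes gc: "graph_connected E" and icA: "induces_connected E A"
    and d1: "A \<inter> B1 = {}" and d2: "B1 \<inter> B2 = {}" and un: "A \<union> B1 \<union> B2 = UNIV"
    and ne: "\<forall>x\<in>B1. \<forall>y\<in>B2. (x,y)\<notin>E \<and> (y,x)\<notin>E" and Ane: "A \<noteq> {}"
  shows "induces_connected E (A \<union> B1)"
proof -
  let ?T = "A \<union> B1"
  obtain a0 where a0: "a0 \<in> A" using Ane by blast
  have symT: "(x,y) \<in> RR E ?T \<Longrightarrow> (y,x) \<in> RR E ?T" for x y unfolding RR_def by auto
  have symS: "(x,y) \<in> (RR E ?T)\<^sup>* \<Longrightarrow> (y,x) \<in> (RR E ?T)\<^sup>*" for x y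
  proof (induction rule: rtrancl_induct)
    case base then show ?case by simp
  next
    case (step y z) then show ?case
      by (meson converse_rtrancl_into_rtrancl symT)
  qed
  have monoA: "(RR E A)\<^sup>* \<subseteq> (RR E ?T)\<^sup>*"
    by (rule rtrancl_mono) (auto simp: RR_def)
  have key: "(b,a0) \<in> (RR E UNIV)\<^sup>* \<Longrightarrow> b \<in> B1 \<Longrightarrow> \<exists>a\<in>A. (b,a) \<in> (RR E ?T)\<^sup>*" for b
  proof (induction rule: converse_rtrancl_induct)
    case base then show ?case using a0 d1 by auto
  next
    case (step b b')
    have "b' \<in> A \<or> b' \<in> B1 \<or> b' \<in> B2" using un by auto
    then show ?case
    proof (elim disjE)
      assume "b' \<in> A"
      then have "(b,b') \<in> RR E ?T" using step by (auto simp: RR_def)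
      then show ?thesis using \<open>b' \<in> A\<close> by blast
    next
      assume h: "b' \<in> B1"
      then obtain a where "a \<in> A" "(b',a) \<in> (RR E ?T)\<^sup>*" using step by blast
      moreover have "(b,b') \<in> RR E ?T" using step h by (auto simp: RR_def)
      ultimately show ?thesis by (meson converse_rtrancl_into_rtrancl)
    next
      assume "b' \<in> B2"
      then show ?thesis using step ne by (auto simp: RR_def)
    qed
  qed
  have reach: "x \<in> ?T \<Longrightarrow> \<exists>a\<in>A. (x,a) \<in> (RR E ?T)\<^sup>*" for x
  proof -
    assume "x \<in> ?T"
    moreover have "(x,a0) \<in> (RR E UNIV)\<^sup>*" using gc unfolding graph_connected_def ic_RR by blast
    ultimately show ?thesis using key by blast
  qed
  show ?thesis unfolding ic_RR
  proof (intro ballI)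
    fix u v assume u: "u \<in> ?T" and v: "v \<in> ?T"
    obtain a1 where a1: "a1 \<in> A" "(u,a1) \<in> (RR E ?T)\<^sup>*" using reach u by blast
    obtain a2 where a2: "a2 \<in> A" "(v,a2) \<in> (RR E ?T)\<^sup>*" using reach v by blast
    have "(a1,a2) \<in> (RR E ?T)\<^sup>*" using icA a1 a2 monoA unfolding ic_RR by blast
    moreover have "(a2,v) \<in> (RR E ?T)\<^sup>*" using symS a2 by blast
    ultimately show "(u,v) \<in> (RR E ?T)\<^sup>*" using a1 by (meson rtrancl_trans)
  qed
qed

lemma W_add:
  assumes "\<forall>e\<in>E. \<bar>h (snd e) - h (fst e)\<bar> = \<bar>f (snd e) - f (fst e)\<bar> + c * \<bar>g (snd e) - g (fst e)\<bar>"
  shows "W11_norm E \<nu> h = W11_norm E \<nu> f + c * W11_norm E \<nu> g"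
proof -
  have "W11_norm E \<nu> h = (\<Sum>e\<in>E. \<bar>f (snd e) - f (fst e)\<bar> * \<nu> e + c * (\<bar>g (snd e) - g (fst e)\<bar> * \<nu> e))"
    unfolding W11_norm_def
  proof (rule sum.cong)
    fix e assume "e \<in> E"
    then have "\<bar>h (snd e) - h (fst e)\<bar> = \<bar>f (snd e) - f (fst e)\<bar> + c * \<bar>g (snd e) - g (fst e)\<bar>"
      using assms by blast
    then show "\<bar>h (snd e) - h (fst e)\<bar> * \<nu> e = \<bar>f (snd e) - f (fst e)\<bar> * \<nu> e + c * (\<bar>g (snd e) - g (fst e)\<bar> * \<nu> e)"
      by (simp add: distrib_right)
  qed simp
  then show ?thesis unfolding W11_norm_def by (simp add: sum.distrib sum_distrib_left)
qed

lemma W_nonneg: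
  assumes "\<forall>e\<in>E. \<nu> e > 0"
  shows "W11_norm E \<nu> f \<ge> 0"
  unfolding W11_norm_def using assms by (intro sum_nonneg) (simp add: less_imp_le)

lemma sn_add: "is_seminorm N \<Longrightarrow> N (\<lambda>x. f x + g x) \<le> N f + N g"
  unfolding is_seminorm_def by blast

lemma sn_scale: "is_seminorm N \<Longrightarrow> N (\<lambda>x. c * f x) = \<bar>c\<bar> * N f"
  unfolding is_seminorm_def by blast


lemma sn_zero: "is_seminorm N \<Longrightarrow> N (\<lambda>x. 0) = 0"
  using sn_scale[of N 0 "\<lambda>x. 0"] by simp

lemma sn_three:
  assumes sn: "is_seminorm N" and n1: "N (indic UNIV) = 0"
  shows "N (\<lambda>x. f x + g x + (-1) * indic UNIV x) \<le> N f + N g"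
proof -
  have "N (\<lambda>x. f x + g x + (-1) * indic UNIV x) \<le> N (\<lambda>x. f x + g x) + N (\<lambda>x. (-1) * indic UNIV x)"
    using sn_add[OF sn, of "\<lambda>x. f x + g x" "\<lambda>x. (-1) * indic UNIV x"] by simp
  also have "N (\<lambda>x. (-1) * indic UNIV x) = 0" using sn_scale[OF sn, of "-1" "indic UNIV"] n1 by simp
  finally show ?thesis using sn_add[OF sn, of f g] by simp
qed

locale setting =
  fixes E :: "('a::finite \<times> 'a) set"
    and \<nu> :: "'a \<times> 'a \<Rightarrow> real"
    and N :: "('a \<Rightarrow> real) \<Rightarrow> real"
    and C :: real
  assumes gc: "graph_connected E"
    and pos: "\<forall>e\<in>E. \<nu> e > 0"
    and sn: "is_seminorm N"
    and n1: "N (indic UNIV) = 0"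
    and C0: "C \<ge> 0"
    and hyp: "\<forall>A. simply_connected E A \<longrightarrow> N (indic A) \<le> C * W11_norm E \<nu> (indic A)"
begin

lemma L1: "induces_connected E A \<Longrightarrow> N (indic A) \<le> C * W11_norm E \<nu> (indic A)"
proof (induction "card (UNIV - A)" arbitrary: A rule: less_induct)
  case less
  show ?case
  proof (cases "induces_connected E (UNIV - A)")
    case True
    then show ?thesis using hyp less.prems unfolding simply_connected_def by blast
  next
    case False
    then obtain B1 B2 where B: "B1 \<union> B2 = UNIV - A" "B1 \<inter> B2 = {}" "B1 \<noteq> {}" "B2 \<noteq> {}"
      "\<forall>x\<in>B1. \<forall>y\<in>B2. (x,y)\<notin>E \<and> (y,x)\<notin>E" by (rule split_disconn)
    have Ane: "A \<noteq> {}" using False gc unfolding graph_connected_def by auto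
    have c1: "induces_connected E (A \<union> B1)"
      by (rule connect_union[OF gc less.prems _ B(2) _ B(5) Ane]) (use B in auto)
    have c2: "induces_connected E (A \<union> B2)"
      by (rule connect_union[OF gc less.prems, of B2 B1]) (use B Ane in auto)
    have e1: "UNIV - (A \<union> B1) = B2" using B by auto
    have e2: "UNIV - (A \<union> B2) = B1" using B by auto
    have "card B2 < card (UNIV - A)"
      using B by (intro psubset_card_mono) auto
    then have P1: "N (indic (A \<union> B1)) \<le> C * W11_norm E \<nu> (indic (A \<union> B1))"
      using less.hyps c1 e1 by metis
    have "card B1 < card (UNIV - A)"
      using B by (intro psubset_card_mono) auto
    then have P2: "N (indic (A \<union> B2)) \<le> C * W11_norm E \<nu> (indic (A \<union> B2))"
      using less.hyps c2 e2 by metis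
    have ind: "indic A = (\<lambda>x. indic (A \<union> B1) x + indic (A \<union> B2) x + (-1) * indic UNIV x)"
      using B by (auto simp: indic_def fun_eq_iff)
    have W: "W11_norm E \<nu> (indic A) = W11_norm E \<nu> (indic (A \<union> B1)) + 1 * W11_norm E \<nu> (indic (A \<union> B2))"
    proof (rule W_add, rule ballI)
      fix e assume "e \<in> E"
      then have "\<not> (fst e \<in> B1 \<and> snd e \<in> B2)" "\<not> (fst e \<in> B2 \<and> snd e \<in> B1)"
        using B(5) by (cases e; auto)+
      then show "\<bar>indic A (snd e) - indic A (fst e)\<bar> = \<bar>indic (A \<union> B1) (snd e) - indic (A \<union> B1) (fst e)\<bar> +
         1 * \<bar>indic (A \<union> B2) (snd e) - indic (A \<union> B2) (fst e)\<bar>"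
        using B(1,2) unfolding indic_def by auto
    qed
    have "N (indic A) \<le> N (indic (A \<union> B1)) + N (indic (A \<union> B2))"
      unfolding ind by (rule sn_three[OF sn n1])
    also have "\<dots> \<le> C * W11_norm E \<nu> (indic A)" using P1 P2 W by (simp add: distrib_left)
    finally show ?thesis .
  qed
qed

lemma L2: "N (indic A) \<le> C * W11_norm E \<nu> (indic A)"
proof (induction "card A" arbitrary: A rule: less_induct)
  case less
  show ?case
  proof (cases "induces_connected E A")
    case True
    then show ?thesis by (rule L1)
  next
    case False
    then obtain A1 A2 where B: "A1 \<union> A2 = A" "A1 \<inter> A2 = {}" "A1 \<noteq> {}" "A2 \<noteq> {}"
      "\<forall>x\<in>A1. \<forall>y\<in>A2. (x,y)\<notin>E \<and> (y,x)\<notin>E" by (rule split_disconn)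
    have "card A1 < card A" using B by (intro psubset_card_mono) auto
    then have P1: "N (indic A1) \<le> C * W11_norm E \<nu> (indic A1)" using less.hyps by blast
    have "card A2 < card A" using B by (intro psubset_card_mono) auto
    then have P2: "N (indic A2) \<le> C * W11_norm E \<nu> (indic A2)" using less.hyps by blast
    have ind: "indic A = (\<lambda>x. indic A1 x + indic A2 x)"
      using B by (auto simp: indic_def fun_eq_iff)
    have W: "W11_norm E \<nu> (indic A) = W11_norm E \<nu> (indic A1) + 1 * W11_norm E \<nu> (indic A2)"
    proof (rule W_add, rule ballI)
      fix e assume "e \<in> E"
      then have "\<not> (fst e \<in> A1 \<and> snd e \<in> A2)" "\<not> (fst e \<in> A2 \<and> snd e \<in> A1)"
        using B(5) by (cases e; auto)+
      then show "\<bar>indic A (snd e) - indic A (fst e)\<bar> = \<bar>indic A1 (snd e) - indic A1 (fst e)\<bar> +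
         1 * \<bar>indic A2 (snd e) - indic A2 (fst e)\<bar>"
        using B(1,2) unfolding indic_def by auto
    qed
    have "N (indic A) \<le> N (indic A1) + N (indic A2)"
      unfolding ind by (rule sn_add[OF sn])
    also have "\<dots> \<le> C * W11_norm E \<nu> (indic A)" using P1 P2 W by (simp add: distrib_left)
    finally show ?thesis .
  qed
qed

lemma L3: "N f \<le> C * W11_norm E \<nu> f"
proof (induction "card (range f)" arbitrary: f rule: less_induct)
  case less
  have fin: "finite (range f)" by simp
  have rne: "range f \<noteq> {}" by simp
  show ?case
  proof (cases "card (range f) \<le> 1")
    case True
    have "card (range f) \<noteq> 0" using card_0_eq[OF fin] rne by blast
    then have "card (range f) = 1" using True by linarith
    then obtain c where "range f = {c}" by (rule card_1_singletonE)
    then have "f = (\<lambda>x. c * indic UNIV x)" by (auto simp: indic_def fun_eq_iff)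
    then have "N f = 0" using sn_scale[OF sn, of c "indic UNIV"] n1 by simp
    then show ?thesis using W_nonneg[OF pos, of f] C0 by simp
  next
    case False
    define m where "m = Min (range f)"
    have m: "m \<in> range f" "\<And>x. m \<le> f x" unfolding m_def using fin rne by auto
    define R where "R = range f - {m}"
    have Rfin: "finite R" unfolding R_def by simp
    have Rne: "R \<noteq> {}"
    proof
      assume "R = {}"
      then have "range f = {m}" using m(1) unfolding R_def by blast
      then show False using False by simp
    qed
    define m' where "m' = Min R"
    have m': "m' \<in> R" "\<And>y. y \<in> R \<Longrightarrow> m' \<le> y" unfolding m'_def using Rfin Rne by auto
    have "m' \<in> range f" "m' \<noteq> m" using m'(1) unfolding R_def by auto
    then have mm: "m < m'" using m(2) by (metis order_le_neq_trans rangeE)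
    define S where "S = {x. f x = m}"
    have out: "\<And>x. x \<notin> S \<Longrightarrow> m' \<le> f x" using m' unfolding S_def R_def by auto
    define g where "g = (\<lambda>x. max (f x) m')"
    have rg: "range g = R"
    proof
      show "range g \<subseteq> R" using m' mm unfolding g_def R_def by (auto simp: max_def)
      show "R \<subseteq> range g"
      proof
        fix y assume "y \<in> R"
        then obtain x where "y = f x" "f x \<noteq> m" unfolding R_def by auto
        then have "g x = y" using out[of x] unfolding g_def S_def by auto
        then show "y \<in> range g" by (metis rangeI)
      qed
    qed
    have "card R < card (range f)" unfolding R_def by (rule card_Diff1_less[OF fin m(1)])
    then have Pg: "N g \<le> C * W11_norm E \<nu> g" using less.hyps rg by metis
    have PS: "N (indic S) \<le> C * W11_norm E \<nu> (indic S)" by (rule L2)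
    have fe: "f = (\<lambda>x. g x + (-(m' - m)) * indic S x)"
    proof (rule ext)
      fix x
      show "f x = g x + (-(m' - m)) * indic S x"
      proof (cases "x \<in> S")
        case True
        then have "f x = m" unfolding S_def by simp
        then show ?thesis using True mm unfolding g_def indic_def by simp
      next
        case False
        then show ?thesis using out[OF False] unfolding g_def indic_def by simp
      qed
    qed
    have W: "W11_norm E \<nu> f = W11_norm E \<nu> g + (m' - m) * W11_norm E \<nu> (indic S)"
    proof (rule W_add, rule ballI)
      fix e assume "e \<in> E"
      obtain u v where e: "e = (u, v)" by (cases e)
      have "\<bar>f v - f u\<bar> = \<bar>g v - g u\<bar> + (m' - m) * \<bar>indic S v - indic S u\<bar>"
      proof (cases "u \<in> S"; cases "v \<in> S")
        assume "u \<in> S" "v \<in> S"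
        then show ?thesis unfolding g_def indic_def S_def by simp
      next
        assume a: "u \<in> S" "v \<notin> S"
        then have "f u = m" "m' \<le> f v" using out unfolding S_def by auto
        then show ?thesis using a mm unfolding g_def indic_def by simp
      next
        assume a: "u \<notin> S" "v \<in> S"
        then have "f v = m" "m' \<le> f u" using out unfolding S_def by auto
        then show ?thesis using a mm unfolding g_def indic_def by simp
      next
        assume a: "u \<notin> S" "v \<notin> S"
        then have "m' \<le> f v" "m' \<le> f u" using out by auto
        then show ?thesis using a unfolding g_def indic_def by simp
      qed
      then show "\<bar>f (snd e) - f (fst e)\<bar> = \<bar>g (snd e) - g (fst e)\<bar> + (m' - m) * \<bar>indic S (snd e) - indic S (fst e)\<bar>"
        using e by simp
    qed
    have "N f \<le> N g + N (\<lambda>x. (-(m' - m)) * indic S x)"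
      by (subst fe, rule sn_add[OF sn])
    also have "N (\<lambda>x. (-(m' - m)) * indic S x) = (m' - m) * N (indic S)"
      using sn_scale[OF sn, of "-(m' - m)" "indic S"] mm by simp
    also have "N g + (m' - m) * N (indic S) \<le> C * W11_norm E \<nu> g + (m' - m) * (C * W11_norm E \<nu> (indic S))"
      using Pg PS mm by (intro add_mono mult_left_mono) auto
    also have "\<dots> = C * (W11_norm E \<nu> g + (m' - m) * W11_norm E \<nu> (indic S))"
      by (simp add: algebra_simps)
    also have "\<dots> = C * W11_norm E \<nu> f" using W by simp
    finally show ?thesis .
  qed
qed

end

theorem theorem2p3:
  fixes E :: "('a::finite \<times> 'a) set"
    and \<nu> :: "'a \<times> 'a \<Rightarrow> real"
    and N :: "('a \<Rightarrow> real) \<Rightarrow> real"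
    and C :: real
  assumes "graph_connected E"
    and "\<forall>e\<in>E. \<nu> e > 0"
    and "is_seminorm N"
    and "N (indic UNIV) = 0"
    and "C \<ge> 0"
    and "\<forall>A. simply_connected E A \<longrightarrow> N (indic A) \<le> C * W11_norm E \<nu> (indic A)"
  shows "\<forall>f. N f \<le> C * W11_norm E \<nu> f"
proof -
  interpret setting E \<nu> N C using assms by unfold_locales
  show ?thesis using L3 by blast
qed

end
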